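(* Let $\ell_v$ be a vertical line and $\ell_h$ a horizontal line, and let $\mathcal L$ be a finite family of L-frames, all of the same type, each of which intersects both $\ell_v$ and $\ell_h$. Then the intersection graph of $\mathcal L$ is a permutation graph; more precisely, taking the order in which the L-frames cross $\ell_v$ and the order in which they cross $\ell_h$ gives two orderings of $\mathcal L$ such that two L-frames intersect iff they appear in different relative order in the two orderings.
   Context: An L-frame is the union of a closed horizontal segment and a closed vertical segment sharing an endpoint (the corner); its type is determined by which directions (left/right, up/down) the two segments extend from the corner. A graph is a permutation graph if its vertices can be placed on two parallel lines so that, joining each vertex's two copies by a segment, two vertices are adjacent iff their segments cross (equivalently, iff they appear in different relative order on the two lines). Intersection graphs join two objects iff they intersect. *)

theory Defs
  imports "HOL-Analysis.Analysis"
begin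

text \<open>An L-frame is described by its corner (cx, cy), the x-coordinate hx of the
  other endpoint of its horizontal segment and the y-coordinate vy of the other
  endpoint of its vertical segment.\<close>
datatype lframe = LFrame (cx: real) (cy: real) (hx: real) (vy: real)

definition is_lframe :: "lframe \<Rightarrow> bool" where
  "is_lframe L \<longleftrightarrow> hx L \<noteq> cx L \<and> vy L \<noteq> cy L"

definition lpts :: "lframe \<Rightarrow> (real \<times> real) set" where
  "lpts L = closed_segment (cx L, cy L) (hx L, cy L) \<union> closed_segment (cx L, cy L) (cx L, vy L)"

definition ltype :: "lframe \<Rightarrow> real \<times> real" where
  "ltype L = (sgn (hx L - cx L), sgn (vy L - cy L))"

definition vline :: "real \<Rightarrow> (real \<times> real) set" where
  "vline a = {p. fst p = a}"

definition hline :: "real \<Rightarrow> (real \<times> real) set" where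
  "hline b = {p. snd p = b}"

definition crosses_before_v :: "real \<Rightarrow> real \<Rightarrow> lframe \<Rightarrow> lframe \<Rightarrow> bool" where
  "crosses_before_v a s A B \<longleftrightarrow>
     (\<forall>p\<in>lpts A \<inter> vline a. \<forall>q\<in>lpts B \<inter> vline a. s * snd p < s * snd q)"

definition crosses_before_h :: "real \<Rightarrow> real \<Rightarrow> lframe \<Rightarrow> lframe \<Rightarrow> bool" where
  "crosses_before_h b s A B \<longleftrightarrow>
     (\<forall>p\<in>lpts A \<inter> hline b. \<forall>q\<in>lpts B \<inter> hline b. s * fst p < s * fst q)"

end

theory Submission
  imports Defs
begin
lemma seg_h: "(x,y) \<in> closed_segment (x1::real,y0::real) (x2,y0) \<longleftrightarrow> y = y0 \<and> x \<in> closed_segment x1 x2"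
  unfolding closed_segment_def by (auto simp: scaleR_prod_def algebra_simps)
lemma seg_v: "(x,y) \<in> closed_segment (x0::real,y1::real) (x0,y2) \<longleftrightarrow> x = x0 \<and> y \<in> closed_segment y1 y2"
  unfolding closed_segment_def by (auto simp: scaleR_prod_def algebra_simps)
lemma lpts_iff: "(x,y) \<in> lpts L \<longleftrightarrow> (y = cy L \<and> x \<in> closed_segment (cx L) (hx L)) \<or> (x = cx L \<and> y \<in> closed_segment (cy L) (vy L))"
  unfolding lpts_def using seg_h seg_v by blast
lemma lpts_iff2: "(x,y) \<in> lpts L \<longleftrightarrow> (y = cy L \<and> min (cx L) (hx L) \<le> x \<and> x \<le> max (cx L) (hx L)) \<or> (x = cx L \<and> min (cy L) (vy L) \<le> y \<and> y \<le> max (cy L) (vy L))"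
  unfolding lpts_iff closed_segment_eq_real_ivl by auto

lemma meet_v: assumes "lpts L \<inter> vline a \<noteq> {}" shows "(a, cy L) \<in> lpts L"
proof -
  obtain y where "(a,y) \<in> lpts L" using assms unfolding vline_def by (auto, metis prod.collapse)
  then show ?thesis unfolding lpts_iff by auto
qed
lemma meet_h: assumes "lpts L \<inter> hline b \<noteq> {}" shows "(cx L, b) \<in> lpts L"
proof -
  obtain x where "(x,b) \<in> lpts L" using assms unfolding hline_def by (auto, metis prod.collapse)
  then show ?thesis unfolding lpts_iff by auto
qed

lemma geo:
  fixes A B :: lframe and s t :: real
  assumes "s \<in> {1,-1}" "t \<in> {1,-1}"
    and "sgn (hx A - cx A) = s" "sgn (vy A - cy A) = t"
    and "sgn (hx B - cx B) = s" "sgn (vy B - cy B) = t"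
    and "(a, cy A) \<in> lpts A" "(cx A, b) \<in> lpts A"
    and "(a, cy B) \<in> lpts B" "(cx B, b) \<in> lpts B"
  shows "lpts A \<inter> lpts B \<noteq> {} \<longleftrightarrow> \<not>((s*cx A < s*cx B \<and> t*cy A < t*cy B) \<or> (s*cx B < s*cx A \<and> t*cy B < t*cy A))"
proof -
  have fA: "s * cx A \<le> s * a" "s * a \<le> s * hx A" "t * cy A \<le> t * b" "t * b \<le> t * vy A"
   and fB: "s * cx B \<le> s * a" "s * a \<le> s * hx B" "t * cy B \<le> t * b" "t * b \<le> t * vy B"
    using assms by (auto simp: lpts_iff2 sgn_if split: if_splits)
  have mem: "(x,y) \<in> lpts L \<longleftrightarrow> (y = cy L \<and> s * cx L \<le> s * x \<and> s * x \<le> s * hx L) \<or> (x = cx L \<and> t * cy L \<le> t * y \<and> t * y \<le> t * vy L)"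
    if "sgn (hx L - cx L) = s" "sgn (vy L - cy L) = t" for x y L
    using that assms(1,2) by (auto simp: lpts_iff2 sgn_if split: if_splits)
  show ?thesis
  proof
    assume "lpts A \<inter> lpts B \<noteq> {}"
    then obtain x y where "(x,y) \<in> lpts A" "(x,y) \<in> lpts B" by auto
    then show "\<not>((s*cx A < s*cx B \<and> t*cy A < t*cy B) \<or> (s*cx B < s*cx A \<and> t*cy B < t*cy A))"
      using mem[OF assms(3,4)] mem[OF assms(5,6)] fA fB assms(1,2) by auto
  next
    assume H: "\<not>((s*cx A < s*cx B \<and> t*cy A < t*cy B) \<or> (s*cx B < s*cx A \<and> t*cy B < t*cy A))"
    note mA = mem[OF assms(3,4)] and mB = mem[OF assms(5,6)]
    consider "cy A = cy B" | "cx A = cx B" | "s*cx A < s*cx B" "t*cy B < t*cy A" | "s*cx B < s*cx A" "t*cy A < t*cy B"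
      using H assms(1,2) by fastforce
    then show "lpts A \<inter> lpts B \<noteq> {}"
    proof cases
      case 1 then have "(a, cy A) \<in> lpts A \<inter> lpts B" using assms by auto
      then show ?thesis by blast
    next
      case 2 then have "(cx A, b) \<in> lpts A \<inter> lpts B" using assms by auto
      then show ?thesis by blast
    next
      case 3 then have "(cx B, cy A) \<in> lpts A \<inter> lpts B" using mA mB fA fB by auto
      then show ?thesis by blast
    next
      case 4 then have "(cx A, cy B) \<in> lpts A \<inter> lpts B" using mA mB fA fB by auto
      then show ?thesis by blast
    qed
  qed
qed
lemma rank:
  fixes R :: "'a \<Rightarrow> 'a \<Rightarrow> bool"
  assumes "finite F" "\<And>x. \<not> R x x" "\<And>x y z. R x y \<Longrightarrow> R y z \<Longrightarrow> R x z"
    "\<And>x y. x \<in> F \<Longrightarrow> y \<in> F \<Longrightarrow> x \<noteq> y \<Longrightarrow> R x y \<or> R y x"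
    "x \<in> F" "y \<in> F"
  shows "card {z\<in>F. R z x} < card {z\<in>F. R z y} \<longleftrightarrow> R x y"
proof
  assume "R x y"
  then have "{z\<in>F. R z x} \<subseteq> {z\<in>F. R z y}" using assms(3) by auto
  moreover have "x \<in> {z\<in>F. R z y} - {z\<in>F. R z x}" using \<open>R x y\<close> assms(2,5) by auto
  ultimately have "{z\<in>F. R z x} \<subset> {z\<in>F. R z y}" by blast
  then show "card {z\<in>F. R z x} < card {z\<in>F. R z y}"
    using assms by (intro psubset_card_mono) auto
next
  assume c: "card {z\<in>F. R z x} < card {z\<in>F. R z y}"
  show "R x y"
  proof (rule ccontr)
    assume "\<not> R x y"
    then have "x = y \<or> R y x" using assms(4-6) by blast
    then have "{z\<in>F. R z y} \<subseteq> {z\<in>F. R z x}" using assms(3) by auto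
    then have "card {z\<in>F. R z y} \<le> card {z\<in>F. R z x}" using assms by (intro card_mono) auto
    with c show False by simp
  qed
qed

lemma rank_inj:
  fixes R :: "'a \<Rightarrow> 'a \<Rightarrow> bool"
  assumes "finite F" "\<And>x. \<not> R x x" "\<And>x y z. R x y \<Longrightarrow> R y z \<Longrightarrow> R x z"
    "\<And>x y. x \<in> F \<Longrightarrow> y \<in> F \<Longrightarrow> x \<noteq> y \<Longrightarrow> R x y \<or> R y x"
  shows "inj_on (\<lambda>x. card {z\<in>F. R z x}) F"
proof (rule inj_onI)
  fix x y assume xy: "x \<in> F" "y \<in> F" "card {z\<in>F. R z x} = card {z\<in>F. R z y}"
  then have "\<not> R x y" "\<not> R y x" using rank[where R=R and F=F, OF assms(1-4) xy(1,2)] rank[where R=R and F=F, OF assms(1-4) xy(2,1)] xy(3) by auto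
  then show "x = y" using assms(4) xy(1,2) by blast
qed

lemma lexfinal: fixes p q p' q' :: real and i j :: nat assumes "i\<noteq>j"
  shows "(\<not>((p<p' \<and> q<q') \<or> (p'<p \<and> q'<q))) \<longleftrightarrow> ((q<q' \<or> (q=q' \<and> (p'<p \<or> (p=p' \<and> i<j)))) \<longleftrightarrow> (p'<p \<or> (p'=p \<and> (q<q' \<or> (q=q' \<and> i<j)))))"
  using assms by (smt (verit) linorder_neqE_nat)
lemma tot: fixes p q p' q' :: real and i j :: nat assumes "i\<noteq>j"
  shows "(q<q' \<or> (q=q' \<and> (p'<p \<or> (p=p' \<and> i<j)))) \<or> (q'<q \<or> (q'=q \<and> (p<p' \<or> (p'=p \<and> j<i))))"
  using assms by (smt (verit) linorder_neqE_nat)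
lemma trans3: fixes p q p' q' p'' q'' :: real and i j k :: nat
  shows "(q<q' \<or> (q=q' \<and> (p'<p \<or> (p=p' \<and> i<j)))) \<Longrightarrow> (q'<q'' \<or> (q'=q'' \<and> (p''<p' \<or> (p'=p'' \<and> j<k))))
   \<Longrightarrow> (q<q'' \<or> (q=q'' \<and> (p''<p \<or> (p=p'' \<and> i<k))))"
  by (smt (verit) order.strict_trans)

theorem mainTheorem11:
  fixes F :: "lframe set" and a b :: real
  assumes "finite F"
    and "\<forall>L\<in>F. is_lframe L"
    and "\<forall>A\<in>F. \<forall>B\<in>F. ltype A = ltype B"
    and "\<forall>L\<in>F. lpts L \<inter> vline a \<noteq> {}"
    and "\<forall>L\<in>F. lpts L \<inter> hline b \<noteq> {}"
  shows "\<exists>sv sh :: real. sv \<in> {1, -1} \<and> sh \<in> {1, -1} \<and>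
          (\<exists>(\<pi>v :: lframe \<Rightarrow> nat) (\<pi>h :: lframe \<Rightarrow> nat). inj_on \<pi>v F \<and> inj_on \<pi>h F \<and>
            (\<forall>A\<in>F. \<forall>B\<in>F. crosses_before_v a sv A B \<longrightarrow> \<pi>v A < \<pi>v B) \<and>
            (\<forall>A\<in>F. \<forall>B\<in>F. crosses_before_h b sh A B \<longrightarrow> \<pi>h A < \<pi>h B) \<and>
            (\<forall>A\<in>F. \<forall>B\<in>F. A \<noteq> B \<longrightarrow>
               (lpts A \<inter> lpts B \<noteq> {} \<longleftrightarrow> (\<pi>v A < \<pi>v B \<longleftrightarrow> \<pi>h B < \<pi>h A))))"
proof (cases "F = {}")
  case True
  then show ?thesis by (intro exI[of _ 1] conjI exI[of _ "\<lambda>_. 0"]) auto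
next
  case False
  then obtain L0 where L0: "L0 \<in> F" by auto
  define s where "s = sgn (hx L0 - cx L0)"
  define t where "t = sgn (vy L0 - cy L0)"
  have L0l: "hx L0 \<noteq> cx L0" "vy L0 \<noteq> cy L0" using assms(2) L0 unfolding is_lframe_def by auto
  have s1: "s \<in> {1,-1}" "t \<in> {1,-1}" using L0l unfolding s_def t_def
    by (simp_all add: sgn_if)
  have st: "sgn (hx L - cx L) = s" "sgn (vy L - cy L) = t" if "L \<in> F" for L
  proof -
    have "ltype L = ltype L0" using assms(3) L0 that by blast
    then show "sgn (hx L - cx L) = s" "sgn (vy L - cy L) = t" unfolding s_def t_def ltype_def by simp_all
  qed
  have mv: "(a, cy L) \<in> lpts L" if "L \<in> F" for L
    using meet_v[of L a] assms(4) that by blast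
  have mh: "(cx L, b) \<in> lpts L" if "L \<in> F" for L
    using meet_h[of L b] assms(5) that by blast
  obtain i :: "lframe \<Rightarrow> nat" and n where i: "inj_on i F" using finite_imp_inj_to_nat_seg[OF assms(1)] by blast
  define kv where "kv A B \<longleftrightarrow> t * cy A < t * cy B \<or> (t * cy A = t * cy B \<and>
     (s * cx B < s * cx A \<or> (s * cx A = s * cx B \<and> i A < i B)))" for A B
  define kh where "kh A B \<longleftrightarrow> s * cx A < s * cx B \<or> (s * cx A = s * cx B \<and>
     (t * cy B < t * cy A \<or> (t * cy A = t * cy B \<and> i B < i A)))" for A B
  have ikv: "\<not> kv x x" "kv x y \<Longrightarrow> kv y z \<Longrightarrow> kv x z"
     "x \<in> F \<Longrightarrow> y \<in> F \<Longrightarrow> x \<noteq> y \<Longrightarrow> kv x y \<or> kv y x" for x y z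
  proof -
    show "\<not> kv x x" unfolding kv_def by simp
    show "kv x y \<Longrightarrow> kv y z \<Longrightarrow> kv x z" unfolding kv_def by (rule trans3)
    show "x \<in> F \<Longrightarrow> y \<in> F \<Longrightarrow> x \<noteq> y \<Longrightarrow> kv x y \<or> kv y x"
    proof -
      assume "x \<in> F" "y \<in> F" "x \<noteq> y"
      then have "i x \<noteq> i y" using inj_onD[OF i] by blast
      from tot[where p="s*cx x" and p'="s*cx y" and q="t*cy x" and q'="t*cy y" and i="i x" and j="i y", OF this] show ?thesis unfolding kv_def by (smt (verit))
    qed
  qed
  have ikh: "\<not> kh x x" "kh x y \<Longrightarrow> kh y z \<Longrightarrow> kh x z"
     "x \<in> F \<Longrightarrow> y \<in> F \<Longrightarrow> x \<noteq> y \<Longrightarrow> kh x y \<or> kh y x" for x y z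
  proof -
    show "\<not> kh x x" unfolding kh_def by simp
    show "kh x y \<Longrightarrow> kh y z \<Longrightarrow> kh x z" unfolding kh_def using trans3[where q="s*cx x" and q'="s*cx y" and q''="s*cx z" and p="t*cy z" and p'="t*cy y" and p''="t*cy x" and i="i z" and j="i y" and k="i x"] by (smt (verit))
    show "x \<in> F \<Longrightarrow> y \<in> F \<Longrightarrow> x \<noteq> y \<Longrightarrow> kh x y \<or> kh y x"
    proof -
      assume "x \<in> F" "y \<in> F" "x \<noteq> y"
      then have "i x \<noteq> i y" using inj_onD[OF i] by blast
      from tot[where q="s*cx x" and q'="s*cx y" and p'="t*cy y" and p="t*cy x" and i="i y" and j="i x", OF this[symmetric]] show ?thesis unfolding kh_def by (smt (verit))
    qed
  qed
  define pv where "pv L = card {z\<in>F. kv z L}" for L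
  define ph where "ph L = card {z\<in>F. kh z L}" for L
  have rv: "pv A < pv B \<longleftrightarrow> kv A B" if "A \<in> F" "B \<in> F" for A B
    unfolding pv_def using rank[where R=kv and F=F, OF assms(1) ikv that] .
  have rh: "ph A < ph B \<longleftrightarrow> kh A B" if "A \<in> F" "B \<in> F" for A B
    unfolding ph_def using rank[where R=kh and F=F, OF assms(1) ikh that] .
  show ?thesis
  proof (rule exI[of _ t], rule exI[of _ s], rule conjI, rule s1, rule conjI, rule s1, rule exI[of _ pv], rule exI[of _ ph], intro conjI ballI impI)
    show "inj_on pv F" unfolding pv_def by (rule rank_inj[where R=kv and F=F, OF assms(1) ikv])
    show "inj_on ph F" unfolding ph_def by (rule rank_inj[where R=kh and F=F, OF assms(1) ikh])
  next
    fix A B assume AB: "A \<in> F" "B \<in> F" "crosses_before_v a t A B"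
    have "(a, cy A) \<in> lpts A \<inter> vline a" "(a, cy B) \<in> lpts B \<inter> vline a"
      using mv[OF AB(1)] mv[OF AB(2)] unfolding vline_def by auto
    then have "t * snd (a, cy A) < t * snd (a, cy B)" using AB(3) unfolding crosses_before_v_def by blast
    then have "t * cy A < t * cy B" by simp
    then show "pv A < pv B" using rv[OF AB(1,2)] unfolding kv_def by simp
  next
    fix A B assume AB: "A \<in> F" "B \<in> F" "crosses_before_h b s A B"
    have "(cx A, b) \<in> lpts A \<inter> hline b" "(cx B, b) \<in> lpts B \<inter> hline b"
      using mh[OF AB(1)] mh[OF AB(2)] unfolding hline_def by auto
    then have "s * fst (cx A, b) < s * fst (cx B, b)" using AB(3) unfolding crosses_before_h_def by blast
    then have "s * cx A < s * cx B" by simp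
    then show "ph A < ph B" using rh[OF AB(1,2)] unfolding kh_def by simp
  next
    fix A B assume AB: "A \<in> F" "B \<in> F" "A \<noteq> B"
    have ii: "i A \<noteq> i B" using inj_onD[OF i] AB by blast
    show "lpts A \<inter> lpts B \<noteq> {} \<longleftrightarrow> (pv A < pv B \<longleftrightarrow> ph B < ph A)"
      unfolding rv[OF AB(1,2)] rh[OF AB(2,1)]
        geo[OF s1 st[OF AB(1)] st[OF AB(2)] mv[OF AB(1)] mh[OF AB(1)] mv[OF AB(2)] mh[OF AB(2)]]
      unfolding kv_def kh_def
      using lexfinal[OF ii, where p="s*cx A" and p'="s*cx B" and q="t*cy A" and q'="t*cy B"] by (smt (verit))
  qed
qed
end
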